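(* Let $M$ be a module over a ring, and let $(\Delta_{\mathcal{I}})_{\mathcal{I}\subseteq\mathcal{P}(M)}$ be the distributed spaces of the spatial constraint system $(\mathcal{P}(M),\subseteq,(\delta_S)_{S\subseteq M})$ (whose agents are the subsets $S\subseteq M$). Then $\Delta_{\{A,B\}}=\delta_{A\cap B}$ for every $A,B\subseteq M$.
   Context: $\delta_S(X)=X\oplus S=\{x+s : x\in X, s\in S\}$ is the dilation by $S$; each $\delta_S$ is a space function on the complete lattice $(\mathcal{P}(M),\subseteq)$, i.e. preserves directed unions, binary unions and $\emptyset$. For a family of space functions $(s_i)_{i\in G}$ on a complete lattice, the distributed space of a group $I\subseteq G$ is $\Delta_I=\max\{f \text{ space function} : f(X)\subseteq s_i(X)\text{ for all } X \text{ and all } i\in I\}$ (this greatest element exists). Here $G=\mathcal{P}(M)$ and $s_S=\delta_S$. *)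

theory Defs
  imports Main
begin

definition directed_family :: "'a::lattice set \<Rightarrow> bool" where
  "directed_family D \<longleftrightarrow> D \<noteq> {} \<and> (\<forall>X\<in>D. \<forall>Y\<in>D. \<exists>Z\<in>D. sup X Y \<le> Z)"

definition space_function :: "('a::complete_lattice \<Rightarrow> 'a) \<Rightarrow> bool" where
  "space_function f \<longleftrightarrow>
     f bot = bot \<and>
     (\<forall>X Y. f (sup X Y) = sup (f X) (f Y)) \<and>
     (\<forall>D. directed_family D \<longrightarrow> f (Sup D) = Sup (f ` D))"

definition distributed_space ::
    "('g \<Rightarrow> 'a::complete_lattice \<Rightarrow> 'a) \<Rightarrow> 'g set \<Rightarrow> ('a \<Rightarrow> 'a)" where
  "distributed_space s I =
     (GREATEST f. space_function f \<and> (\<forall>i\<in>I. \<forall>X. f X \<le> s i X))"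

definition dilation :: "'m::ab_group_add set \<Rightarrow> 'm set \<Rightarrow> 'm set" where
  "dilation S X = {x + s | x s. x \<in> X \<and> s \<in> S}"

end

theory Submission
  imports Defs
begin

lemma dil_sf: "space_function (dilation S)"
proof -
  have 1: "dilation S {} = {}" unfolding dilation_def by simp
  have 2: "dilation S (X \<union> Y) = dilation S X \<union> dilation S Y" for X Y
    unfolding dilation_def by blast
  have 3: "dilation S (\<Union>D) = (\<Union>X\<in>D. dilation S X)" for D
    unfolding dilation_def by blast
  show ?thesis unfolding space_function_def using 1 2 3 by simp
qed

lemma sf_mono: assumes "space_function f" "X \<subseteq> Y" shows "f X \<subseteq> f Y"
proof -
  have "f Y = f X \<union> f Y" using assms unfolding space_function_def
    by (metis sup.absorb2 sup_set_def)
  then show ?thesis by blast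
qed

lemma sf_finite: assumes "space_function (f::'a set \<Rightarrow> 'a set)" "finite F"
  shows "f F = (\<Union>x\<in>F. f {x})"
  using assms(2)
proof (induction F rule: finite_induct)
  case empty then show ?case using assms(1) unfolding space_function_def by simp
next
  case (insert x F)
  have "f (insert x F) = f ({x} \<union> F)" by simp
  also have "\<dots> = f {x} \<union> f F" using assms(1) unfolding space_function_def by blast
  finally show ?case using insert by simp
qed

lemma sf_point: assumes "space_function (f::'a set \<Rightarrow> 'a set)" "y \<in> f X"
  shows "\<exists>x\<in>X. y \<in> f {x}"
proof -
  define D where "D = {F. finite F \<and> F \<subseteq> X}"
  have d: "directed_family D" unfolding directed_family_def
  proof (intro conjI ballI)
    show "D \<noteq> {}" unfolding D_def by blast
  next
    fix F G assume "F \<in> D" "G \<in> D"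
    then have "F \<union> G \<in> D" unfolding D_def by simp
    then show "\<exists>Z\<in>D. sup F G \<le> Z" by (intro bexI[of _ "F \<union> G"]) simp_all
  qed
  have s: "Sup D = X" unfolding D_def by auto
  have "\<forall>D. directed_family D \<longrightarrow> f (Sup D) = Sup (f ` D)"
    using assms(1) unfolding space_function_def by simp
  then have "f (Sup D) = Sup (f ` D)" using d by simp
  then have "f X = (\<Union>F\<in>D. f F)" using s by simp
  then obtain F where "F \<in> D" "y \<in> f F" using assms(2) by auto
  then have "finite F" "F \<subseteq> X" "y \<in> f F" unfolding D_def by auto
  then have "y \<in> (\<Union>x\<in>F. f {x})" using sf_finite[OF assms(1) \<open>finite F\<close>] by simp
  then show ?thesis using \<open>F \<subseteq> X\<close> by blast
qed

theorem mainTheorem15: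
  fixes A B :: "'m::ab_group_add set"
  shows "distributed_space dilation {A, B} = dilation (A \<inter> B)"
  unfolding distributed_space_def
proof (rule Greatest_equality)
  show "space_function (dilation (A \<inter> B)) \<and> (\<forall>i\<in>{A, B}. \<forall>X. dilation (A \<inter> B) X \<le> dilation i X)"
  proof (intro conjI ballI allI)
    show "space_function (dilation (A \<inter> B))" by (rule dil_sf)
  next
    fix i X assume "i \<in> {A, B}"
    then have "A \<inter> B \<subseteq> i" by blast
    show "dilation (A \<inter> B) X \<le> dilation i X"
    proof
      fix y assume "y \<in> dilation (A \<inter> B) X"
      then obtain x s where "y = x + s" "x \<in> X" "s \<in> A \<inter> B" unfolding dilation_def by blast
      then show "y \<in> dilation i X" unfolding dilation_def using \<open>A \<inter> B \<subseteq> i\<close> by blast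
    qed
  qed
next
  fix f :: "'m set \<Rightarrow> 'm set"
  assume h: "space_function f \<and> (\<forall>i\<in>{A, B}. \<forall>X. f X \<le> dilation i X)"
  show "f \<le> dilation (A \<inter> B)"
  proof (rule le_funI, rule subsetI)
    fix X y assume "y \<in> f X"
    have sf: "space_function f" using h by simp
    obtain x where x: "x \<in> X" "y \<in> f {x}" using sf_point[OF sf \<open>y \<in> f X\<close>] by blast
    have hA: "f {x} \<subseteq> dilation A {x}" and hB: "f {x} \<subseteq> dilation B {x}"
      using h by simp_all
    have "y \<in> dilation A {x}" "y \<in> dilation B {x}" using x(2) hA hB by auto
    then obtain a b where ab: "a \<in> A" "b \<in> B" "y = x + a" "y = x + b" unfolding dilation_def by auto
    then have "a = b" by simp
    then have "a \<in> A \<inter> B" using ab by simp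
    then show "y \<in> dilation (A \<inter> B) X" unfolding dilation_def using x(1) ab(3) by blast
  qed
qed

end
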